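(* Let $(G,\varphi)$ be a complex unit gain graph whose underlying graph $G$ has order $n$. Then $$2n-2c(G)-2\alpha(G)\le r(G,\varphi)\le 2n-2\alpha(G).$$
   Context: All graphs are simple and finite. A complex unit gain graph $(G,\varphi)$ consists of a simple graph $G$ with vertex set $\{v_1,\dots,v_n\}$ and a gain function $\varphi$ assigning to each oriented edge $e_{ij}$ (from $v_i$ to $v_j$, for each edge $v_iv_j$ of $G$) a complex number $\varphi(e_{ij})$ with $|\varphi(e_{ij})|=1$, such that $\varphi(e_{ji})=\varphi(e_{ij})^{-1}=\overline{\varphi(e_{ij})}$. Its adjacency matrix $A(G,\varphi)=(a_{ij})$ is the $n\times n$ Hermitian matrix with $a_{ij}=\varphi(e_{ij})$ if $v_i$ and $v_j$ are adjacent and $a_{ij}=0$ otherwise; $r(G,\varphi)$ denotes the rank of $A(G,\varphi)$. $\alpha(G)$ is the independence number of $G$ (the maximum size of a set of pairwise non-adjacent vertices), and $c(G)=|E(G)|-|V(G)|+\omega(G)$ is the cyclomatic number of $G$, where $\omega(G)$ is the number of connected components of $G$. *)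

theory Defs
  imports "HOL-Analysis.Analysis"
begin

definition simple_graph :: "('v::finite \<Rightarrow> 'v \<Rightarrow> bool) \<Rightarrow> bool" where
  "simple_graph E \<longleftrightarrow> (\<forall>u v. E u v \<longrightarrow> E v u) \<and> (\<forall>v. \<not> E v v)"

definition unit_gain :: "('v::finite \<Rightarrow> 'v \<Rightarrow> bool) \<Rightarrow> ('v \<Rightarrow> 'v \<Rightarrow> complex) \<Rightarrow> bool" where
  "unit_gain E \<phi> \<longleftrightarrow> (\<forall>u v. E u v \<longrightarrow> norm (\<phi> u v) = 1 \<and> \<phi> v u = inverse (\<phi> u v))"

definition gain_adj :: "('v::finite \<Rightarrow> 'v \<Rightarrow> bool) \<Rightarrow> ('v \<Rightarrow> 'v \<Rightarrow> complex) \<Rightarrow> complex^'v^'v" where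
  "gain_adj E \<phi> = (\<chi> i j. if E i j then \<phi> i j else 0)"

definition independence_number :: "('v::finite \<Rightarrow> 'v \<Rightarrow> bool) \<Rightarrow> nat" where
  "independence_number E = Max {card S | S. \<forall>u\<in>S. \<forall>v\<in>S. \<not> E u v}"

definition num_edges :: "('v::finite \<Rightarrow> 'v \<Rightarrow> bool) \<Rightarrow> nat" where
  "num_edges E = card {{u, v} | u v. E u v}"

definition num_components :: "('v::finite \<Rightarrow> 'v \<Rightarrow> bool) \<Rightarrow> nat" where
  "num_components E = card (UNIV // {(u, v). E\<^sup>*\<^sup>* u v})"

definition cyclomatic :: "('v::finite \<Rightarrow> 'v \<Rightarrow> bool) \<Rightarrow> int" where
  "cyclomatic E = int (num_edges E) - int CARD('v) + int (num_components E)"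

end

theory Submission imports Defs begin

definition iso :: "'v \<Rightarrow> ('v \<Rightarrow> 'v \<Rightarrow> bool) \<Rightarrow> 'v \<Rightarrow> 'v \<Rightarrow> bool" where
  "iso v E = (\<lambda>a b. E a b \<and> a \<noteq> v \<and> b \<noteq> v)"

definition cls :: "('v \<Rightarrow> 'v \<Rightarrow> bool) \<Rightarrow> 'v \<Rightarrow> 'v set" where
  "cls E x = {y. E\<^sup>*\<^sup>* x y}"

definition nbr :: "('v \<Rightarrow> 'v \<Rightarrow> bool) \<Rightarrow> 'v \<Rightarrow> 'v set" where
  "nbr E v = {w. E v w}"

lemma comps_eq: "num_components E = card (range (cls E))"
  unfolding num_components_def
  by (rule arg_cong[where f=card]) (auto simp: quotient_def Image_def cls_def)

lemma rt_sym: "simple_graph E \<Longrightarrow> E\<^sup>*\<^sup>* x y \<Longrightarrow> E\<^sup>*\<^sup>* y x"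
  by (metis simple_graph_def sympD symp_rtranclp sympI)

lemma cls_eq: "simple_graph E \<Longrightarrow> cls E x = cls E y \<longleftrightarrow> E\<^sup>*\<^sup>* x y"
  unfolding cls_def
  by (auto simp: set_eq_iff) (meson rt_sym rtranclp.rtrancl_refl rtranclp_trans)+

lemma simple_iso: "simple_graph E \<Longrightarrow> simple_graph (iso v E)"
  by (auto simp: simple_graph_def iso_def)

lemma iso_le: "iso v E a b \<Longrightarrow> E a b" by (simp add: iso_def)

lemma rt_iso_le: "(iso v E)\<^sup>*\<^sup>* a b \<Longrightarrow> E\<^sup>*\<^sup>* a b"
  by (metis iso_le mono_rtranclp)

lemma rt_iso_to_v: "(iso v E)\<^sup>*\<^sup>* y z \<Longrightarrow> z = v \<Longrightarrow> y = v"
  by (induction rule: rtranclp_induct) (auto simp: iso_def)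

lemma rt_iso_from_v: "(iso v E)\<^sup>*\<^sup>* y z \<Longrightarrow> y = v \<Longrightarrow> z = v"
  by (induction rule: rtranclp_induct) (auto simp: iso_def)

lemma rt_avoid: "E\<^sup>*\<^sup>* x y \<Longrightarrow> \<not> E\<^sup>*\<^sup>* x v \<Longrightarrow> (iso v E)\<^sup>*\<^sup>* x y"
proof (induction rule: rtranclp_induct)
  case base then show ?case by simp
next
  case (step z w)
  have "z \<noteq> v" using step by auto
  moreover have "w \<noteq> v" using step by (metis rtranclp.rtrancl_into_rtrancl)
  ultimately have "iso v E z w" using step by (simp add: iso_def)
  with step show ?case by (meson rtranclp.rtrancl_into_rtrancl)
qed

lemma rt_reach_v:
  assumes sg: "simple_graph E" and "E\<^sup>*\<^sup>* y z" and "y \<noteq> v"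
  shows "(iso v E)\<^sup>*\<^sup>* y z \<or> (\<exists>a. E v a \<and> (iso v E)\<^sup>*\<^sup>* y a)"
  using assms(2)
proof (induction rule: rtranclp_induct)
  case base then show ?case by simp
next
  case (step z w)
  show ?case
  proof (cases "\<exists>a. E v a \<and> (iso v E)\<^sup>*\<^sup>* y a")
    case True then show ?thesis by simp
  next
    case False
    then have yz: "(iso v E)\<^sup>*\<^sup>* y z" using step.IH by blast
    have zv: "z \<noteq> v" using rt_iso_to_v[OF yz] assms(3) by auto
    show ?thesis
    proof (cases "w = v")
      case True
      then have "E v z" using step sg by (auto simp: simple_graph_def)
      then show ?thesis using yz by auto
    next
      case False
      then have "iso v E z w" using step zv by (simp add: iso_def)
      then show ?thesis using yz by (meson rtranclp.rtrancl_into_rtrancl)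
    qed
  qed
qed

lemma finite_sets: "finite (X :: ('v::finite) set set)"
  by (rule finite_subset[of _ UNIV]) auto

lemma comp_iso:
  fixes E :: "'v::finite \<Rightarrow> 'v \<Rightarrow> bool"
  assumes sg: "simple_graph E"
  shows "card (range (cls (iso v E))) = card (range (cls E)) + card (cls (iso v E) ` nbr E v)"
proof -
  let ?E' = "iso v E"
  let ?Q = "range (cls E)" and ?Q' = "range (cls ?E')" and ?K = "cls ?E' ` nbr E v"
  let ?Cv = "cls E v"
  have sg': "simple_graph ?E'" using sg by (rule simple_iso)
  have clsv: "cls ?E' v = {v}"
    by (auto simp: cls_def dest: rt_iso_from_v)
  have same: "cls ?E' y = cls E y" if "\<not> E\<^sup>*\<^sup>* y v" for y
    unfolding cls_def using that rt_avoid[of E y _ v] rt_iso_le[of v E y] by blast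
  have eq: "?Q' = (?Q - {?Cv}) \<union> ({{v}} \<union> ?K)"
  proof (intro equalityI subsetI)
    fix X assume "X \<in> ?Q'"
    then obtain y where X: "X = cls ?E' y" by auto
    show "X \<in> (?Q - {?Cv}) \<union> ({{v}} \<union> ?K)"
    proof (cases "y = v")
      case True then show ?thesis using X clsv by simp
    next
      case yv: False
      show ?thesis
      proof (cases "E\<^sup>*\<^sup>* y v")
        case True
        from rt_reach_v[OF sg True yv] obtain a where a: "E v a" "?E'\<^sup>*\<^sup>* y a"
          using rt_iso_to_v[of v E y v] yv by blast
        then have "X = cls ?E' a" using X cls_eq[OF sg', of y a] by simp
        moreover have "a \<in> nbr E v" using a by (simp add: nbr_def)
        ultimately show ?thesis by blast
      next
        case False
        then have "X = cls E y" using X same by simp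
        moreover have "cls E y \<noteq> ?Cv" using False cls_eq[OF sg, of y v] by simp
        ultimately show ?thesis by blast
      qed
    qed
  next
    fix X assume X: "X \<in> (?Q - {?Cv}) \<union> ({{v}} \<union> ?K)"
    show "X \<in> ?Q'"
    proof -
      { assume "X \<in> ?Q - {?Cv}"
        then obtain y where y: "X = cls E y" "cls E y \<noteq> ?Cv" by auto
        then have "\<not> E\<^sup>*\<^sup>* y v" using cls_eq[OF sg, of y v] by simp
        then have ?thesis using y same by (metis rangeI) }
      moreover have "{v} \<in> ?Q'" using clsv by (metis rangeI)
      ultimately show ?thesis using X by blast
    qed
  qed
  have d1: "{v} \<notin> ?K"
  proof
    assume "{v} \<in> ?K"
    then obtain a where a: "E v a" "cls ?E' a = {v}" by (auto simp: nbr_def)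
    have "a \<in> cls ?E' a" by (simp add: cls_def)
    then have "a = v" using a(2) by blast
    then show False using a sg by (auto simp: simple_graph_def)
  qed
  have d2: "{v} \<notin> ?Q - {?Cv}"
  proof
    assume "{v} \<in> ?Q - {?Cv}"
    then obtain y where y: "{v} = cls E y" "cls E y \<noteq> ?Cv" by auto
    then have "E\<^sup>*\<^sup>* y v" by (auto simp: cls_def set_eq_iff)
    then show False using y cls_eq[OF sg] by blast
  qed
  have d3: "?K \<inter> (?Q - {?Cv}) = {}"
  proof (rule ccontr)
    assume "?K \<inter> (?Q - {?Cv}) \<noteq> {}"
    then obtain a y where a: "E v a" "cls ?E' a = cls E y" "cls E y \<noteq> ?Cv" by (auto simp: nbr_def)
    have "a \<in> cls ?E' a" by (simp add: cls_def)
    then have "a \<in> cls E y" using a(2) by simp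
    then have "E\<^sup>*\<^sup>* y a" by (simp add: cls_def)
    moreover have "E\<^sup>*\<^sup>* a v" using a sg by (auto simp: simple_graph_def)
    ultimately have "E\<^sup>*\<^sup>* y v" by simp
    then show False using a cls_eq[OF sg] by blast
  qed
  have c1: "card ?Q' = card (?Q - {?Cv}) + card ({{v}} \<union> ?K)"
    unfolding eq by (rule card_Un_disjoint) (use d1 d2 d3 finite_sets in auto)
  have c2: "card ({{v}} \<union> ?K) = 1 + card ?K"
    using d1 finite_sets[of ?K] by simp
  have c3: "card (?Q - {?Cv}) = card ?Q - 1"
    by (simp add: finite_sets)
  have c4: "card ?Q \<ge> 1"
    using card_gt_0_iff[of ?Q] finite_sets[of ?Q] by auto
  show ?thesis using c1 c2 c3 c4 by simp
qed


definition Ed :: "('v \<Rightarrow> 'v \<Rightarrow> bool) \<Rightarrow> 'v set set" where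
  "Ed E = {{u, w} | u w. E u w}"

lemma num_edges_Ed: "num_edges E = card (Ed E)" by (simp add: num_edges_def Ed_def)

lemma edges_iso:
  fixes E :: "'v::finite \<Rightarrow> 'v \<Rightarrow> bool"
  assumes sg: "simple_graph E"
  shows "num_edges E = num_edges (iso v E) + card (nbr E v)"
proof -
  have eq: "Ed E = Ed (iso v E) \<union> (\<lambda>w. {v, w}) ` nbr E v"
  proof (intro equalityI subsetI)
    fix e assume "e \<in> Ed E"
    then obtain a b where e: "e = {a, b}" "E a b" by (auto simp: Ed_def)
    show "e \<in> Ed (iso v E) \<union> (\<lambda>w. {v, w}) ` nbr E v"
    proof (cases "a = v \<or> b = v")
      case True
      then show ?thesis
      proof
        assume "a = v" then show ?thesis using e by (auto simp: nbr_def)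
      next
        assume "b = v"
        then have "E v a" "e = {v, a}" using e sg by (auto simp: simple_graph_def)
        then show ?thesis by (auto simp: nbr_def)
      qed
    next
      case False
      then have "iso v E a b" using e by (simp add: iso_def)
      then show ?thesis using e by (auto simp: Ed_def)
    qed
  next
    fix e assume "e \<in> Ed (iso v E) \<union> (\<lambda>w. {v, w}) ` nbr E v"
    then show "e \<in> Ed E" unfolding Ed_def nbr_def iso_def by blast
  qed
  have disj: "Ed (iso v E) \<inter> (\<lambda>w. {v, w}) ` nbr E v = {}"
  proof (rule ccontr)
    assume "Ed (iso v E) \<inter> (\<lambda>w. {v, w}) ` nbr E v \<noteq> {}"
    then obtain e where e1: "e \<in> Ed (iso v E)" and e2: "e \<in> (\<lambda>w. {v, w}) ` nbr E v" by blast
    from e1 obtain a b where "e = {a, b}" "iso v E a b" unfolding Ed_def by blast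
    then have "v \<notin> e" by (auto simp: iso_def)
    moreover have "v \<in> e" using e2 by blast
    ultimately show False by blast
  qed
  have inj: "inj_on (\<lambda>w. {v, w}) (nbr E v)"
  proof (rule inj_onI)
    fix a b assume ab: "a \<in> nbr E v" "b \<in> nbr E v" "{v, a} = {v, b}"
    have "a \<noteq> v" using ab(1) sg by (simp add: nbr_def simple_graph_def) (metis)
    moreover have "a \<in> {v, b}" using ab(3) by blast
    ultimately show "a = b" by blast
  qed
  have "card (Ed E) = card (Ed (iso v E)) + card ((\<lambda>w. {v, w}) ` nbr E v)"
    unfolding eq by (rule card_Un_disjoint) (use disj finite_sets in auto)
  then show ?thesis using card_image[OF inj] by (simp add: num_edges_Ed)
qed

lemma cyc_iso:
  fixes E :: "'v::finite \<Rightarrow> 'v \<Rightarrow> bool"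
  assumes sg: "simple_graph E"
  shows "cyclomatic E = cyclomatic (iso v E) + int (card (nbr E v)) - int (card (cls (iso v E) ` nbr E v))"
  using edges_iso[OF sg, of v] comp_iso[OF sg, of v]
  by (simp add: cyclomatic_def comps_eq)

lemma k_le: "card (cls E' ` nbr E v) \<le> card (nbr E (v::'v::finite))"
  by (rule card_image_le) simp

lemma k_less:
  assumes "a \<in> nbr E v" "b \<in> nbr E v" "a \<noteq> b" "simple_graph E'" "E'\<^sup>*\<^sup>* a b"
  shows "card (cls E' ` nbr E (v::'v::finite)) < card (nbr E v)"
proof -
  have "\<not> inj_on (cls E') (nbr E v)"
  proof
    assume "inj_on (cls E') (nbr E v)"
    moreover have "cls E' a = cls E' b" using cls_eq[OF assms(4), of a b] assms(5) by simp
    ultimately show False using assms(1-3) unfolding inj_on_def by blast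
  qed
  then show ?thesis using k_le[of E' E v] inj_on_iff_eq_card[of "nbr E v" "cls E'"] by simp
qed

lemma cyc_iso_le: "simple_graph E \<Longrightarrow> cyclomatic (iso v E) \<le> cyclomatic (E::'v::finite \<Rightarrow> _)"
  using cyc_iso[of E v] k_le[of "iso v E" E v] by simp

definition ni :: "('v \<Rightarrow> 'v \<Rightarrow> bool) \<Rightarrow> 'v set" where
  "ni E = {v. \<exists>w. E v w}"

lemma ni_iso: "ni (iso v E) \<subseteq> ni E - {v}"
  by (auto simp: ni_def iso_def)

lemma cls_isolated: "v \<notin> ni E \<Longrightarrow> cls E v = {v}"
proof -
  assume v: "v \<notin> ni E"
  have "E\<^sup>*\<^sup>* v y \<Longrightarrow> y = v" for y
    by (induction rule: rtranclp_induct) (use v in \<open>auto simp: ni_def\<close>)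
  then show ?thesis by (auto simp: cls_def)
qed

lemma cyc_empty:
  fixes E :: "'v::finite \<Rightarrow> 'v \<Rightarrow> bool"
  assumes "ni E = {}"
  shows "cyclomatic E = 0"
proof -
  have "Ed E = {}" using assms by (auto simp: Ed_def ni_def)
  moreover have "range (cls E) = (\<lambda>x. {x}) ` UNIV"
  proof -
    have "cls E x = {x}" for x using assms cls_isolated[of x E] by blast
    then show ?thesis by auto
  qed
  moreover have "card ((\<lambda>x::'v. {x}) ` UNIV) = CARD('v)"
    by (rule card_image) (auto simp: inj_on_def)
  ultimately show ?thesis by (simp add: cyclomatic_def comps_eq num_edges_Ed)
qed

definition forest :: "('v \<Rightarrow> 'v \<Rightarrow> bool) \<Rightarrow> bool" where
  "forest E \<longleftrightarrow> (\<forall>v a b. E v a \<and> E v b \<and> a \<noteq> b \<longrightarrow> \<not> (iso v E)\<^sup>*\<^sup>* a b)"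

lemma forest_iso: "forest E \<Longrightarrow> forest (iso w E)"
  unfolding forest_def
proof (intro allI impI notI)
  fix v a b
  assume F: "\<forall>v a b. E v a \<and> E v b \<and> a \<noteq> b \<longrightarrow> \<not> (iso v E)\<^sup>*\<^sup>* a b"
    and h: "iso w E v a \<and> iso w E v b \<and> a \<noteq> b" and r: "(iso v (iso w E))\<^sup>*\<^sup>* a b"
  have "iso v (iso w E) \<le> iso v E" by (auto simp: iso_def)
  then have "(iso v (iso w E))\<^sup>*\<^sup>* \<le> (iso v E)\<^sup>*\<^sup>*" by (rule rtranclp_mono)
  then have "(iso v E)\<^sup>*\<^sup>* a b" using r by blast
  then show False using F h by (auto simp: iso_def)
qed

lemma forest_cyc:
  fixes E :: "'v::finite \<Rightarrow> 'v \<Rightarrow> bool"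
  assumes "simple_graph E" "forest E"
  shows "cyclomatic E = 0"
  using assms
proof (induction "card (ni E)" arbitrary: E rule: less_induct)
  case less
  show ?case
  proof (cases "ni E = {}")
    case True then show ?thesis by (rule cyc_empty)
  next
    case False
    then obtain v where v: "v \<in> ni E" by auto
    have lt: "card (ni (iso v E)) < card (ni E)"
    proof -
      have "ni (iso v E) \<subset> ni E" using ni_iso[of v E] v by blast
      then show ?thesis by (rule psubset_card_mono[OF finite])
    qed
    have c0: "cyclomatic (iso v E) = 0"
      by (rule less.hyps[OF lt simple_iso[OF less.prems(1)] forest_iso[OF less.prems(2)]])
    have "inj_on (cls (iso v E)) (nbr E v)"
    proof (rule inj_onI)
      fix a b assume ab: "a \<in> nbr E v" "b \<in> nbr E v" "cls (iso v E) a = cls (iso v E) b"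
      have sgv: "simple_graph (iso v E)" by (rule simple_iso[OF less.prems(1)])
      have "(iso v E)\<^sup>*\<^sup>* a b" using ab(3) cls_eq[OF sgv, of a b] by simp
      then show "a = b" using less.prems(2) ab(1,2) unfolding forest_def nbr_def by blast
    qed
    then have "card (cls (iso v E) ` nbr E v) = card (nbr E v)" by (simp add: card_image)
    then show ?thesis using cyc_iso[OF less.prems(1), of v] c0 by simp
  qed
qed

lemma handshake:
  fixes E :: "'v::finite \<Rightarrow> 'v \<Rightarrow> bool"
  assumes sg: "simple_graph E"
  shows "2 * num_edges E = (\<Sum>v\<in>UNIV. card (nbr E v))"
proof -
  let ?P = "{(a, b). E a b}"
  have "?P = (SIGMA v:UNIV. nbr E v)" by (auto simp: nbr_def)
  then have cP: "card ?P = (\<Sum>v\<in>UNIV. card (nbr E v))" by simp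
  let ?g = "\<lambda>(a, b). {a, b}"
  have fib: "card {x. x \<in> ?P \<and> ?g x = e} = 2" if ee: "e \<in> Ed E" for e
  proof -
    obtain a b where e: "e = {a, b}" "E a b" using ee unfolding Ed_def by blast
    have ab: "a \<noteq> b" using e sg by (auto simp: simple_graph_def)
    have "{x. x \<in> ?P \<and> ?g x = e} = {(a, b), (b, a)}"
      using e sg by (auto simp: simple_graph_def doubleton_eq_iff)
    then show ?thesis using ab by simp
  qed
  have "(\<Sum>e\<in>Ed E. card {x. x \<in> ?P \<and> ?g x = e}) = card ?P"
  proof -
    have img: "?g ` ?P \<subseteq> Ed E" by (auto simp: Ed_def)
    have "(\<Sum>e\<in>Ed E. \<Sum>x\<in>{x. x \<in> ?P \<and> ?g x = e}. (1::nat)) = (\<Sum>x\<in>?P. 1)"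
      by (rule sum.group[OF finite finite_sets img])
    then show ?thesis by simp
  qed
  then have "card ?P = (\<Sum>e\<in>Ed E. 2)" using fib by simp
  then show ?thesis using cP by (simp add: num_edges_Ed)
qed

lemma comps_lower:
  fixes E :: "'v::finite \<Rightarrow> 'v \<Rightarrow> bool"
  assumes sg: "simple_graph E" and "ni E \<noteq> {}"
  shows "card (range (cls E)) \<ge> CARD('v) - card (ni E) + 1"
proof -
  obtain x0 w where xw: "E x0 w" using assms(2) by (auto simp: ni_def)
  have "x0 \<noteq> w" using xw sg by (auto simp: simple_graph_def)
  have nsing: "cls E x0 \<notin> (\<lambda>x. {x}) ` (UNIV - ni E)"
  proof
    assume "cls E x0 \<in> (\<lambda>x. {x}) ` (UNIV - ni E)"
    then obtain x where "cls E x0 = {x}" by auto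
    moreover have "x0 \<in> cls E x0" "w \<in> cls E x0" using xw by (auto simp: cls_def)
    ultimately show False using \<open>x0 \<noteq> w\<close> by auto
  qed
  have sub: "insert (cls E x0) ((\<lambda>x. {x}) ` (UNIV - ni E)) \<subseteq> range (cls E)"
  proof -
    have "{x} \<in> range (cls E)" if "x \<notin> ni E" for x
      using cls_isolated[OF that] by (metis rangeI)
    then show ?thesis by blast
  qed
  have c1: "card ((\<lambda>x::'v. {x}) ` (UNIV - ni E)) = CARD('v) - card (ni E)"
    by (subst card_image) (auto simp: inj_on_def card_Diff_subset)
  have "card (insert (cls E x0) ((\<lambda>x. {x}) ` (UNIV - ni E))) = CARD('v) - card (ni E) + 1"
    using nsing c1 finite_sets by simp
  moreover have "card (insert (cls E x0) ((\<lambda>x. {x}) ` (UNIV - ni E))) \<le> card (range (cls E))"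
    by (rule card_mono[OF finite_sets sub])
  ultimately show ?thesis by simp
qed

lemma rank_gen: "rank (A::'a::field^'n^'m) = vec.dim (rows A)"
  by (simp add: row_rank_def_gen)

lemma row_gain_adj: "row i (gain_adj E \<phi>) = (\<chi> j. if E i j then \<phi> i j else 0)"
  by (simp add: row_def gain_adj_def)

lemma rank_iso_le:
  fixes E :: "'v::finite \<Rightarrow> 'v \<Rightarrow> bool"
  shows "rank (gain_adj (iso v E) \<phi>) \<le> rank (gain_adj E \<phi>)"
proof -
  define D where "D = (\<lambda>x::complex^'v. \<chi> j. if j = v then 0 else x$j)"
  have lin: "Vector_Spaces.linear (*s) (*s) D"
    unfolding D_def by (unfold_locales) (auto simp: vec_eq_iff algebra_simps)
  have sub: "rows (gain_adj (iso v E) \<phi>) \<subseteq> insert 0 (D ` rows (gain_adj E \<phi>))"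
  proof
    fix x assume "x \<in> rows (gain_adj (iso v E) \<phi>)"
    then obtain i where x: "x = row i (gain_adj (iso v E) \<phi>)" by (auto simp: rows_def)
    show "x \<in> insert 0 (D ` rows (gain_adj E \<phi>))"
    proof (cases "i = v")
      case True then show ?thesis by (simp add: x row_gain_adj iso_def vec_eq_iff)
    next
      case False
      have "x = D (row i (gain_adj E \<phi>))"
        using False by (simp add: x row_gain_adj iso_def vec_eq_iff D_def)
      then show ?thesis by (auto simp: rows_def)
    qed
  qed
  have "vec.dim (rows (gain_adj (iso v E) \<phi>)) \<le> vec.dim (insert 0 (D ` rows (gain_adj E \<phi>)))"
    by (rule vec.dim_subset[OF sub])
  also have "\<dots> = vec.dim (D ` rows (gain_adj E \<phi>))"
    by (simp add: vec.dim_insert vec.span_zero)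
  also have "\<dots> \<le> vec.dim (rows (gain_adj E \<phi>))"
    by (rule vec.dim_image_le[OF lin])
  finally show ?thesis by (simp add: rank_gen)
qed

definition indep :: "('v \<Rightarrow> 'v \<Rightarrow> bool) \<Rightarrow> 'v set \<Rightarrow> bool" where
  "indep E S \<longleftrightarrow> (\<forall>u\<in>S. \<forall>v\<in>S. \<not> E u v)"

lemma rank_upper:
  fixes E :: "'v::finite \<Rightarrow> 'v \<Rightarrow> bool"
  assumes "indep E S"
  shows "rank (gain_adj E \<phi>) \<le> 2 * (CARD('v) - card S)"
proof -
  define T where "T = UNIV - S"
  define W where "W = (\<lambda>i. row i (gain_adj E \<phi>)) ` T \<union> (\<lambda>j. axis j (1::complex)) ` T"
  have cT: "card T = CARD('v) - card S" unfolding T_def by (simp add: card_Diff_subset)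
  have "card W \<le> card T + card T" unfolding W_def
    by (meson add_mono card_Un_le card_image_le finite order_trans)
  have sub: "rows (gain_adj E \<phi>) \<subseteq> vec.span W"
  proof
    fix x assume "x \<in> rows (gain_adj E \<phi>)"
    then obtain i where x: "x = row i (gain_adj E \<phi>)" by (auto simp: rows_def)
    show "x \<in> vec.span W"
    proof (cases "i \<in> T")
      case True then show ?thesis by (auto simp: x W_def intro: vec.span_base)
    next
      case False
      have eq: "x = (\<Sum>j\<in>T. (x $ j) *s axis j 1)"
      proof (subst vec_eq_iff, intro allI)
        fix k
        have "(\<Sum>j\<in>T. (x $ j) *s axis j (1::complex)) $ k = (\<Sum>j\<in>T. (x $ j) * (if k = j then 1 else 0))"
          by (simp add: axis_def)
        also have "\<dots> = (if k \<in> T then x $ k else 0)"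
          by (simp add: if_distrib[of "\<lambda>t. _ * t"] sum.delta[OF finite] cong: if_cong)
        also have "\<dots> = x $ k"
          using assms False by (auto simp: x row_gain_adj T_def indep_def)
        finally show "x $ k = (\<Sum>j\<in>T. (x $ j) *s axis j 1) $ k" by simp
      qed
      show ?thesis
        by (subst eq, rule vec.span_sum, rule vec.span_scale, rule vec.span_base) (auto simp: W_def)
    qed
  qed
  have "vec.dim (rows (gain_adj E \<phi>)) \<le> card W"
    by (rule vec.dim_le_card[OF sub]) (simp add: W_def)
  then show ?thesis using \<open>card W \<le> card T + card T\<close> cT by (simp add: rank_gen)
qed


lemma rank_pend:
  fixes E :: "'v::finite \<Rightarrow> 'v \<Rightarrow> bool"
  assumes sg: "simple_graph E" and ug: "unit_gain E \<phi>"
    and uv: "E u v" and pend: "\<And>w. E u w \<Longrightarrow> w = v"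
  shows "rank (gain_adj (iso v (iso u E)) \<phi>) + 2 \<le> rank (gain_adj E \<phi>)"
proof -
  let ?A = "gain_adj E \<phi>" and ?B = "gain_adj (iso v (iso u E)) \<phi>"
  define ru where "ru = row u ?A"
  define rv where "rv = row v ?A"
  have vu: "E v u" using sg uv by (auto simp: simple_graph_def)
  have neq: "u \<noteq> v" using sg uv by (auto simp: simple_graph_def)
  have nz1: "\<phi> u v \<noteq> 0" using ug uv unfolding unit_gain_def by (metis norm_zero zero_neq_one)
  have nz2: "\<phi> v u \<noteq> 0" using ug vu unfolding unit_gain_def by (metis norm_zero zero_neq_one)
  have ru_v: "ru $ v = \<phi> u v" using uv by (simp add: ru_def row_gain_adj)
  have ru_u: "ru $ j = 0" if "j \<noteq> v" for j using pend that by (auto simp: ru_def row_gain_adj)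
  have rv_u: "rv $ u = \<phi> v u" using vu by (simp add: rv_def row_gain_adj)
  define Z1 where "Z1 = {x::complex^'v. \<forall>i. i \<in> {u} \<longrightarrow> x $ i = 0}"
  define Z2 where "Z2 = {x::complex^'v. \<forall>i. i \<in> {u,v} \<longrightarrow> x $ i = 0}"
  have sZ1: "vec.subspace Z1" unfolding Z1_def by (rule subspace_substandard_cart)
  have sZ2: "vec.subspace Z2" unfolding Z2_def by (rule subspace_substandard_cart)
  have rB: "rows ?B \<subseteq> Z2"
    by (auto simp: rows_def row_gain_adj iso_def Z2_def)
  have spB: "vec.span (rows ?B) \<subseteq> Z2" by (rule vec.span_minimal[OF rB sZ2])
  have spB1: "vec.span (insert ru (rows ?B)) \<subseteq> Z1"
    by (rule vec.span_minimal[OF _ sZ1]) (use rB ru_u neq in \<open>auto simp: Z1_def Z2_def\<close>)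
  have n1: "ru \<notin> vec.span (rows ?B)" using spB ru_v nz1 by (auto simp: Z2_def)
  have n2: "rv \<notin> vec.span (insert ru (rows ?B))" using spB1 rv_u nz2 by (auto simp: Z1_def)
  have d: "vec.dim (insert rv (insert ru (rows ?B))) = vec.dim (rows ?B) + 2"
    using n1 n2 by (simp add: vec.dim_insert)
  have sub: "insert rv (insert ru (rows ?B)) \<subseteq> vec.span (rows ?A)"
  proof -
    have "ru \<in> rows ?A" "rv \<in> rows ?A" by (auto simp: ru_def rv_def rows_def)
    moreover have "x \<in> vec.span (rows ?A)" if "x \<in> rows ?B" for x
    proof -
      obtain i where x: "x = row i ?B" using \<open>x \<in> rows ?B\<close> by (auto simp: rows_def)
      show ?thesis
      proof (cases "i = u \<or> i = v")
        case True
        then have "x = 0" by (auto simp: x row_gain_adj iso_def vec_eq_iff)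
        then show ?thesis by (simp add: vec.span_zero)
      next
        case False
        have "x = row i ?A - ((?A $ i $ v) / \<phi> u v) *s ru"
        proof (subst vec_eq_iff, intro allI)
          fix j
          show "x $ j = (row i ?A - ((?A $ i $ v) / \<phi> u v) *s ru) $ j"
          proof (cases "j = v")
            case True then show ?thesis using False nz1 ru_v
              by (simp add: x row_def iso_def gain_adj_def)
          next
            case jv: False
            have "E i u \<Longrightarrow> False" using pend sg False by (auto simp: simple_graph_def)
            then show ?thesis using False jv ru_u[OF jv]
              by (auto simp: x row_def iso_def gain_adj_def)
          qed
        qed
        moreover have "row i ?A \<in> vec.span (rows ?A)" by (auto simp: rows_def intro: vec.span_base)
        moreover have "ru \<in> vec.span (rows ?A)" using \<open>ru \<in> rows ?A\<close> by (rule vec.span_base)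
        ultimately show ?thesis by (metis vec.span_diff vec.span_scale)
      qed
    qed
    ultimately show ?thesis by (auto intro: vec.span_base)
  qed
  have "vec.dim (insert rv (insert ru (rows ?B))) \<le> vec.dim (rows ?A)"
    by (rule vec.dim_mono[OF sub])
  then show ?thesis using d by (simp add: rank_gen)
qed


lemma unit_gain_iso: "unit_gain E \<phi> \<Longrightarrow> unit_gain (iso v E) \<phi>"
  by (simp add: unit_gain_def iso_def)

lemma alpha_def': "independence_number E = Max {card S | S. indep E S}"
  by (simp add: independence_number_def indep_def)

lemma alpha_fin: "finite {card S | S. indep E (S::'v::finite set)}"
proof -
  have "{card S | S. indep E (S::'v set)} \<subseteq> card ` (UNIV :: 'v set set)" by blast
  then show ?thesis by (rule finite_subset) simp
qed

lemma alpha_ge: "indep E (S::'v::finite set) \<Longrightarrow> card S \<le> independence_number E"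
  unfolding alpha_def' by (rule Max_ge[OF alpha_fin]) blast

lemma alpha_ex: "\<exists>S::'v::finite set. indep E S \<and> card S = independence_number E"
proof -
  have "indep E {}" by (simp add: indep_def)
  then have ne: "{card S | S. indep E (S::'v set)} \<noteq> {}" by blast
  have "independence_number E \<in> {card S | S. indep E (S::'v set)}"
    unfolding alpha_def' by (rule Max_in[OF alpha_fin ne])
  then show ?thesis by auto
qed

lemma alpha_drop:
  fixes E E' :: "'v::finite \<Rightarrow> 'v \<Rightarrow> bool"
  assumes "\<And>S. indep E' S \<Longrightarrow> indep E (S - {v})"
  shows "independence_number E' \<le> independence_number E + 1"
proof -
  obtain S where S: "indep E' S" "card S = independence_number E'" using alpha_ex by blast
  have "card S \<le> card (S - {v}) + 1"
    using card_Diff_singleton_if[of S v] by (cases "v \<in> S") auto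
  moreover have "card (S - {v}) \<le> independence_number E" by (rule alpha_ge[OF assms[OF S(1)]])
  ultimately show ?thesis using S(2) by simp
qed

lemma lower:
  fixes E :: "'v::finite \<Rightarrow> 'v \<Rightarrow> bool"
  assumes "simple_graph E" "unit_gain E \<phi>"
  shows "2 * int CARD('v) - 2 * cyclomatic E - 2 * int (independence_number E)
           \<le> int (rank (gain_adj E \<phi>))"
  using assms
proof (induction "card (ni E)" arbitrary: E rule: less_induct)
  case less
  note sg = less.prems(1) and ug = less.prems(2)
  show ?case
  proof (cases "ni E = {}")
    case True
    have "indep E UNIV" using True by (auto simp: indep_def ni_def)
    then have "CARD('v) \<le> independence_number E" by (rule alpha_ge)
    then show ?thesis using cyc_empty[OF True] by simp
  next
    case ne: False
    show ?thesis
    proof (cases "\<exists>v a b. E v a \<and> E v b \<and> a \<noteq> b \<and> (iso v E)\<^sup>*\<^sup>* a b")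
      case True
      then obtain v a b where vab: "E v a" "E v b" "a \<noteq> b" "(iso v E)\<^sup>*\<^sup>* a b" by blast
      have lt: "card (ni (iso v E)) < card (ni E)"
      proof -
        have "v \<in> ni E" using vab by (auto simp: ni_def)
        then have "ni (iso v E) \<subset> ni E" using ni_iso[of v E] by blast
        then show ?thesis by (rule psubset_card_mono[OF finite])
      qed
      have IH: "2 * int CARD('v) - 2 * cyclomatic (iso v E) - 2 * int (independence_number (iso v E))
           \<le> int (rank (gain_adj (iso v E) \<phi>))"
        by (rule less.hyps[OF lt simple_iso[OF sg] unit_gain_iso[OF ug]])
      have kl: "card (cls (iso v E) ` nbr E v) < card (nbr E v)"
        by (rule k_less[of a E v b]) (use vab simple_iso[OF sg] in \<open>auto simp: nbr_def\<close>)
      have c: "cyclomatic (iso v E) \<le> cyclomatic E - 1"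
        using cyc_iso[OF sg, of v] kl by simp
      have al: "independence_number (iso v E) \<le> independence_number E + 1"
        by (rule alpha_drop[where v=v]) (auto simp: indep_def iso_def)
      have r: "rank (gain_adj (iso v E) \<phi>) \<le> rank (gain_adj E \<phi>)" by (rule rank_iso_le)
      show ?thesis using IH c al r by linarith
    next
      case noA: False
      show ?thesis
      proof (cases "\<exists>u. card (nbr E u) = 1")
        case True
        then obtain u where "card (nbr E u) = 1" by blast
        then obtain v where nv: "nbr E u = {v}" by (rule card_1_singletonE)
        have uv: "E u v" using nv by (auto simp: nbr_def)
        have pend: "\<And>w. E u w \<Longrightarrow> w = v" using nv by (auto simp: nbr_def)
        let ?E2 = "iso v (iso u E)"
        have lt: "card (ni ?E2) < card (ni E)"
        proof -
          have "u \<in> ni E" using uv by (auto simp: ni_def)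
          then have "ni ?E2 \<subset> ni E" using ni_iso[of v "iso u E"] ni_iso[of u E] by blast
          then show ?thesis by (rule psubset_card_mono[OF finite])
        qed
        have sg2: "simple_graph ?E2" by (rule simple_iso[OF simple_iso[OF sg]])
        have IH: "2 * int CARD('v) - 2 * cyclomatic ?E2 - 2 * int (independence_number ?E2)
           \<le> int (rank (gain_adj ?E2 \<phi>))"
          by (rule less.hyps[OF lt sg2 unit_gain_iso[OF unit_gain_iso[OF ug]]])
        have c: "cyclomatic ?E2 \<le> cyclomatic E"
          using cyc_iso_le[OF simple_iso[OF sg], of v u] cyc_iso_le[OF sg, of u] by simp
        have al: "independence_number ?E2 \<le> independence_number E + 1"
        proof (rule alpha_drop[where v=v])
          fix S assume S: "indep ?E2 S"
          show "indep E (S - {v})"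
            unfolding indep_def
          proof (intro ballI notI)
            fix x y assume xy: "x \<in> S - {v}" "y \<in> S - {v}" "E x y"
            have "x \<noteq> u" using pend xy by blast
            moreover have "y \<noteq> u" using pend xy sg by (auto simp: simple_graph_def)
            ultimately have "?E2 x y" using xy by (auto simp: iso_def)
            then show False using S xy by (auto simp: indep_def)
          qed
        qed
        have r2: "rank (gain_adj ?E2 \<phi>) + 2 \<le> rank (gain_adj E \<phi>)"
          by (rule rank_pend[OF sg ug uv pend])
        show ?thesis using IH c al r2 by linarith
      next
        case noB: False
        have F: "forest E" unfolding forest_def using noA by blast
        have c0: "cyclomatic E = 0" by (rule forest_cyc[OF sg F])
        have deg: "card (nbr E v) \<ge> 2" if "v \<in> ni E" for v
        proof -
          have "nbr E v \<noteq> {}" using that by (auto simp: ni_def nbr_def)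
          then have "card (nbr E v) \<noteq> 0" by simp
          moreover have "card (nbr E v) \<noteq> 1" using noB by blast
          ultimately show ?thesis by linarith
        qed
        have "2 * card (ni E) = (\<Sum>v\<in>ni E. 2)" by simp
        also have "\<dots> \<le> (\<Sum>v\<in>ni E. card (nbr E v))" by (rule sum_mono) (use deg in auto)
        also have "\<dots> \<le> (\<Sum>v\<in>UNIV. card (nbr E v))" by (rule sum_mono2) auto
        also have "\<dots> = 2 * num_edges E" by (rule handshake[OF sg, symmetric])
        finally have m: "card (ni E) \<le> num_edges E" by simp
        have w: "card (range (cls E)) \<ge> CARD('v) - card (ni E) + 1" by (rule comps_lower[OF sg ne])
        have nle: "card (ni E) \<le> CARD('v)" by (rule card_mono) auto
        have "cyclomatic E \<ge> 1"
          using m w nle by (simp add: cyclomatic_def comps_eq)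
        then show ?thesis using c0 by simp
      qed
    qed
  qed
qed

lemma upper:
  fixes E :: "'v::finite \<Rightarrow> 'v \<Rightarrow> bool"
  shows "int (rank (gain_adj E \<phi>)) \<le> 2 * int CARD('v) - 2 * int (independence_number E)"
proof -
  obtain S where S: "indep E S" "card S = independence_number E" using alpha_ex by blast
  have "card S \<le> CARD('v)" by (rule card_mono) auto
  then show ?thesis using rank_upper[OF S(1), of \<phi>] S(2) by simp
qed

theorem theorem1p1:
  fixes E :: "'v::finite \<Rightarrow> 'v \<Rightarrow> bool" and \<phi> :: "'v \<Rightarrow> 'v \<Rightarrow> complex"
  assumes "simple_graph E" and "unit_gain E \<phi>"
  shows "2 * int CARD('v) - 2 * cyclomatic E - 2 * int (independence_number E)
           \<le> int (rank (gain_adj E \<phi>)) \<and>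
         int (rank (gain_adj E \<phi>)) \<le> 2 * int CARD('v) - 2 * int (independence_number E)"
  using lower[OF assms] upper[of E \<phi>] by blast

end
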